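(* Let $E$ be a real Hilbert space with $\dim(E)\ge2$, let $h\in E$ be a unit vector, and let $H^+=\{x\in E\mid (h,x)>0\}$. Define the relation $\preceq$ on $H^+$ by $x\preceq y \iff \|x-y_\perp\|\le y_h$. Then $(H^+,\preceq)$ is a cc sponge.
   Context: For $x\in E$, $x_h=(h,x)$ and $x_\perp=x-(h,x)h$. An orientation on a set $S$ is a reflexive, antisymmetric binary relation $\preceq$. For $P\subseteq S$, $P$ is right-bounded if there is $s\in S$ with $p\preceq s$ for all $p\in P$. An element $x$ is the join of $P$ if $p\preceq x$ for all $p\in P$ and $x\preceq y$ for every $y\in S$ with $p\preceq y$ for all $p\in P$. An oriented set $(S,\preceq)$ is a conditionally complete sponge (cc sponge) if every nonempty right-bounded subset of $S$ has a join. *)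

theory Defs
  imports "HOL-Analysis.Analysis"
begin

definition orientation :: "'a set \<Rightarrow> ('a \<Rightarrow> 'a \<Rightarrow> bool) \<Rightarrow> bool" where
  "orientation S le \<longleftrightarrow>
     (\<forall>x\<in>S. le x x) \<and> (\<forall>x\<in>S. \<forall>y\<in>S. le x y \<and> le y x \<longrightarrow> x = y)"

definition right_bounded :: "'a set \<Rightarrow> ('a \<Rightarrow> 'a \<Rightarrow> bool) \<Rightarrow> 'a set \<Rightarrow> bool" where
  "right_bounded S le P \<longleftrightarrow> (\<exists>s\<in>S. \<forall>p\<in>P. le p s)"

definition is_join :: "'a set \<Rightarrow> ('a \<Rightarrow> 'a \<Rightarrow> bool) \<Rightarrow> 'a set \<Rightarrow> 'a \<Rightarrow> bool" where
  "is_join S le P x \<longleftrightarrow> x \<in> S \<and> (\<forall>p\<in>P. le p x) \<and>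
     (\<forall>y\<in>S. (\<forall>p\<in>P. le p y) \<longrightarrow> le x y)"

definition cc_sponge :: "'a set \<Rightarrow> ('a \<Rightarrow> 'a \<Rightarrow> bool) \<Rightarrow> bool" where
  "cc_sponge S le \<longleftrightarrow> orientation S le \<and>
     (\<forall>P. P \<subseteq> S \<and> P \<noteq> {} \<and> right_bounded S le P \<longrightarrow> (\<exists>x. is_join S le P x))"

definition comp_h :: "'a::real_inner \<Rightarrow> 'a \<Rightarrow> real" where
  "comp_h h x = h \<bullet> x"

definition comp_perp :: "'a::real_inner \<Rightarrow> 'a \<Rightarrow> 'a" where
  "comp_perp h x = x - (h \<bullet> x) *\<^sub>R h"

definition halfspace :: "'a::real_inner \<Rightarrow> 'a set" where
  "halfspace h = {x. h \<bullet> x > 0}"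

definition sponge_le :: "'a::real_inner \<Rightarrow> 'a \<Rightarrow> 'a \<Rightarrow> bool" where
  "sponge_le h x y \<longleftrightarrow> norm (x - comp_perp h y) \<le> comp_h h y"

end

theory Submission imports Defs begin
lemma interp:
  fixes p a b :: "'a::real_inner"
  shows "norm (p - (a + t *\<^sub>R (b - a)))^2 = (1-t)*norm(p-a)^2 + t*norm(p-b)^2 - t*(1-t)*norm(b-a)^2"
  unfolding power2_norm_eq_inner
  by (simp add: inner_diff_left inner_diff_right inner_add_left inner_add_right inner_commute algebra_simps power2_eq_square)
lemma real_aux:
  fixes a b :: real
  assumes "b \<ge> 0" "\<And>t. 0 < t \<Longrightarrow> t \<le> 1 \<Longrightarrow> (1-t)*b \<le> a"
  shows "b \<le> a"
proof (rule ccontr)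
  assume "\<not> b \<le> a"
  have a0: "0 \<le> a" using assms(2)[of 1] by simp
  hence b0: "b > 0" "a < b" using \<open>\<not> b \<le> a\<close> by auto
  define t where "t = (b-a)/(2*b)"
  have "t > 0" using b0 by (simp add: t_def)
  moreover have "t \<le> 1" using b0 a0 unfolding t_def by (simp add: field_simps)
  ultimately have "(1-t)*b \<le> a" using assms by auto
  moreover have "(1-t)*b = (a+b)/2" using b0 unfolding t_def by (simp add: field_simps)
  ultimately show False using b0 by auto
qed

lemma pyth:
  fixes a b :: "'a::real_inner"
  assumes "a \<bullet> b = 0"
  shows "norm (a + b)^2 = norm a ^2 + norm b ^2"
  using assms unfolding power2_norm_eq_inner
  by (simp add: inner_add_left inner_add_right inner_commute[of b a])

lemma perp_inner:
  fixes h x :: "'a::real_inner"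
  assumes "norm h = 1"
  shows "h \<bullet> comp_perp h x = 0"
proof -
  have "h \<bullet> h = 1" using assms by (metis norm_eq_sqrt_inner real_sqrt_eq_1_iff)
  thus ?thesis by (simp add: comp_perp_def inner_diff_right)
qed

lemma hh: fixes h :: "'a::real_inner" assumes "norm h = 1" shows "h \<bullet> h = 1"
  using assms by (metis norm_eq_sqrt_inner real_sqrt_eq_1_iff)

lemma sponge_le_alt:
  fixes h x y :: "'a::real_inner"
  assumes "norm h = 1"
  shows "sponge_le h x y \<longleftrightarrow> norm (x - comp_perp h y) \<le> h \<bullet> y"
  by (simp add: sponge_le_def comp_h_def)

lemma orient:
  fixes h :: "'a::real_inner"
  assumes unit: "norm h = 1"
  shows "orientation (halfspace h) (sponge_le h)"
  unfolding orientation_def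
proof (intro conjI ballI impI)
  have h1: "h \<bullet> h = 1" using hh[OF unit] .
  fix x assume "x \<in> halfspace h"
  hence "h \<bullet> x > 0" by (simp add: halfspace_def)
  have "x - comp_perp h x = (h \<bullet> x) *\<^sub>R h" by (simp add: comp_perp_def)
  hence "norm (x - comp_perp h x) = h \<bullet> x" using unit \<open>h \<bullet> x > 0\<close> by simp
  thus "sponge_le h x x" by (simp add: sponge_le_def comp_h_def)
next
  have h1: "h \<bullet> h = 1" using hh[OF unit] .
  fix x y assume xy: "x \<in> halfspace h" "y \<in> halfspace h" and le: "sponge_le h x y \<and> sponge_le h y x"
  have dec: "norm (u - comp_perp h v)^2 = norm (comp_perp h u - comp_perp h v)^2 + (h \<bullet> u)^2" for u v
  proof -
    have e: "u - comp_perp h v = (comp_perp h u - comp_perp h v) + (h \<bullet> u) *\<^sub>R h" by (simp add: comp_perp_def)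
    have o: "(comp_perp h u - comp_perp h v) \<bullet> ((h \<bullet> u) *\<^sub>R h) = 0"
      using perp_inner[OF unit] by (simp add: inner_diff_left inner_commute[of _ h] inner_diff_right)
    have "norm ((h \<bullet> u) *\<^sub>R h)^2 = (h \<bullet> u)^2" using unit by simp
    thus ?thesis unfolding e pyth[OF o] by simp
  qed
  have p1: "h \<bullet> x > 0" "h \<bullet> y > 0" using xy by (auto simp: halfspace_def)
  have "norm (x - comp_perp h y)^2 \<le> (h \<bullet> y)^2" using le p1
    by (simp add: sponge_le_def comp_h_def power_mono)
  moreover have "norm (y - comp_perp h x)^2 \<le> (h \<bullet> x)^2" using le p1
    by (simp add: sponge_le_def comp_h_def power_mono)
  ultimately have A: "norm (comp_perp h x - comp_perp h y)^2 + (h \<bullet> x)^2 \<le> (h \<bullet> y)^2"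
     "norm (comp_perp h y - comp_perp h x)^2 + (h \<bullet> y)^2 \<le> (h \<bullet> x)^2" using dec by metis+
  have "norm (comp_perp h y - comp_perp h x) = norm (comp_perp h x - comp_perp h y)" by (rule norm_minus_commute)
  with A have A2: "norm (comp_perp h x - comp_perp h y)^2 + (h \<bullet> y)^2 \<le> (h \<bullet> x)^2" by simp
  from A(1) A2 have "norm (comp_perp h x - comp_perp h y)^2 \<le> 0" by linarith
  hence "norm (comp_perp h x - comp_perp h y) = 0"
    by (simp add: order_antisym)
  hence "comp_perp h x = comp_perp h y" by simp
  moreover from A(1) A2 have "(h \<bullet> x)^2 = (h \<bullet> y)^2"
    using zero_le_power2[of "norm (comp_perp h x - comp_perp h y)"] by linarith
  hence "h \<bullet> x = h \<bullet> y" using p1 by (simp add: power2_eq_iff)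
  ultimately show "x = y" unfolding comp_perp_def by (metis diff_eq_eq)
qed

lemma join_exists:
  fixes h :: "'a::{real_inner, complete_space}"
  assumes unit: "norm h = 1"
    and PS: "P \<subseteq> halfspace h" and Pne: "P \<noteq> {}"
    and sS: "s \<in> halfspace h" and sb: "\<forall>p\<in>P. sponge_le h p s"
  shows "\<exists>x. is_join (halfspace h) (sponge_le h) P x"
proof -
  have h1: "h \<bullet> h = 1" using hh[OF unit] .
  define encl where "encl c r \<longleftrightarrow> h \<bullet> c = 0 \<and> (\<forall>p\<in>P. norm (p - c) \<le> r)" for c r
  define A where "A = {r. \<exists>c. encl c r}"
  define m where "m = Inf A"
  obtain p0 where p0: "p0 \<in> P" using Pne by auto
  have r_nn: "0 \<le> r" if "encl c r" for c r
    using that p0 unfolding encl_def by (meson norm_ge_zero order_trans)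
  have sA: "h \<bullet> s \<in> A" unfolding A_def encl_def
    using perp_inner[OF unit, of s] sb by (auto simp: sponge_le_def comp_h_def)
  have Ane: "A \<noteq> {}" using sA by auto
  have bdd: "bdd_below A" unfolding bdd_below_def A_def using r_nn by blast
  have m_low: "m \<le> r" if "encl c r" for c r
    unfolding m_def using that bdd by (auto intro: cInf_lower simp: A_def)
  have m0: "0 \<le> m" unfolding m_def using Ane r_nn
    by (auto intro!: cInf_greatest simp: A_def)
  have key: "m^2 \<le> (1-t)*ra^2 + t*rb^2 - t*(1-t)*norm(b-a)^2"
    if ea: "encl a ra" and eb: "encl b rb" and t: "0 \<le> t" "t \<le> 1" for a b ra rb t
  proof -
    define q where "q = (1-t)*ra^2 + t*rb^2 - t*(1-t)*norm(b-a)^2"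
    have bnd: "norm (p - (a + t *\<^sub>R (b - a)))^2 \<le> q" if "p \<in> P" for p
    proof -
      have "norm (p - a) \<le> ra" "norm (p - b) \<le> rb" using ea eb that unfolding encl_def by auto
      hence "norm (p - a)^2 \<le> ra^2" "norm (p - b)^2 \<le> rb^2" by (auto intro: power_mono)
      hence "(1-t)*norm(p-a)^2 + t*norm(p-b)^2 \<le> (1-t)*ra^2 + t*rb^2"
        using t by (intro add_mono mult_left_mono) auto
      thus ?thesis unfolding interp q_def by linarith
    qed
    have q0: "0 \<le> q" using bnd[OF p0] by (meson zero_le_power2 order_trans)
    have "encl (a + t *\<^sub>R (b - a)) (sqrt q)"
      unfolding encl_def
    proof (intro conjI ballI)
      show "h \<bullet> (a + t *\<^sub>R (b - a)) = 0" using ea eb unfolding encl_def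
        by (simp add: inner_add_right inner_diff_right)
      fix p assume "p \<in> P"
      thus "norm (p - (a + t *\<^sub>R (b - a))) \<le> sqrt q" using bnd real_le_rsqrt by blast
    qed
    hence "m \<le> sqrt q" by (rule m_low)
    hence "m^2 \<le> (sqrt q)^2" using m0 by (intro power_mono) auto
    thus ?thesis using q0 q_def by simp
  qed
  have ex: "\<exists>c r. encl c r \<and> r < m + inverse (real (Suc n))" for n
  proof -
    have "Inf A < m + inverse (real (Suc n))" unfolding m_def by simp
    from cInf_lessD[OF Ane this] show ?thesis unfolding A_def by auto
  qed
  then obtain cs rs where cr: "\<And>n. encl (cs n) (rs n) \<and> rs n < m + inverse (real (Suc n))"
    by metis
  define K where "K = 2*m + 1"
  have K0: "K > 0" using m0 by (simp add: K_def)
  have gap: "rs n ^2 - m^2 \<le> K * inverse (real (Suc n))" for n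
  proof -
    have a: "m \<le> rs n" using cr m_low by blast
    have b: "rs n - m \<le> inverse (real (Suc n))" using cr[of n] by simp
    have i1: "inverse (real (Suc n)) \<le> 1" by (simp add: field_simps)
    have "rs n ^2 - m^2 = (rs n - m) * (rs n + m)" by (simp add: power2_eq_square algebra_simps)
    also have "\<dots> \<le> inverse (real (Suc n)) * K"
      using a b i1 m0 by (intro mult_mono) (auto simp: K_def)
    finally show ?thesis by (simp add: mult.commute)
  qed
  have dist_bnd: "norm (cs n - cs k)^2 \<le> 2*K*(inverse (real (Suc n)) + inverse (real (Suc k)))" for n k
  proof -
    have "m^2 \<le> (1-1/2)*(rs k)^2 + (1/2)*(rs n)^2 - (1/2)*(1-1/2)*norm(cs n - cs k)^2"
      using key[of "cs k" "rs k" "cs n" "rs n" "1/2"] cr by auto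
    thus ?thesis using gap[of n] gap[of k] by (simp add: algebra_simps)
  qed
  have cauchy: "Cauchy cs"
  proof (rule CauchyI)
    fix e :: real assume e: "0 < e"
    obtain M :: nat where M: "4*K/e^2 < real M" using reals_Archimedean2 by blast
    have "4*K < e^2 * real M" using M e by (simp add: field_simps)
    show "\<exists>M. \<forall>m\<ge>M. \<forall>n\<ge>M. norm (cs m - cs n) < e"
    proof (intro exI allI impI)
      fix n k assume nk: "M \<le> n" "M \<le> k"
      have "inverse (real (Suc n)) \<le> inverse (real (Suc M))" "inverse (real (Suc k)) \<le> inverse (real (Suc M))"
        using nk by (auto intro!: le_imp_inverse_le)
      hence "norm (cs n - cs k)^2 \<le> 2*K*(2*inverse (real (Suc M)))"
        using dist_bnd[of n k] K0 by (smt (verit) mult_left_mono)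
      also have "\<dots> < e^2"
        using \<open>4*K < e^2 * real M\<close> e zero_less_power2[of e] by (simp add: field_simps; linarith)
      finally have "norm (cs n - cs k)^2 < e^2" .
      thus "norm (cs n - cs k) < e" using e by (simp add: power_less_imp_less_base)
    qed
  qed
  then obtain c where c: "cs \<longlonglongrightarrow> c" using Cauchy_convergent_iff convergent_def by blast
  have rs_lim: "rs \<longlonglongrightarrow> m"
  proof (rule tendsto_sandwich[of "\<lambda>n. m" _ _ "\<lambda>n. m + inverse (real (Suc n))"])
    show "\<forall>\<^sub>F n in sequentially. m \<le> rs n" using cr m_low by (intro always_eventually) blast
    show "\<forall>\<^sub>F n in sequentially. rs n \<le> m + inverse (real (Suc n))" using cr less_imp_le by (intro always_eventually) blast
    show "(\<lambda>n. m) \<longlonglongrightarrow> m" by simp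
    show "(\<lambda>n. m + inverse (real (Suc n))) \<longlonglongrightarrow> m"
      using tendsto_add[OF tendsto_const LIMSEQ_inverse_real_of_nat, of m] by simp
  qed
  have hc: "h \<bullet> c = 0"
  proof -
    have l: "(\<lambda>n. h \<bullet> cs n) \<longlonglongrightarrow> h \<bullet> c" by (intro tendsto_intros c)
    have "\<And>n. h \<bullet> cs n = 0" using cr unfolding encl_def by blast
    hence "(\<lambda>n. h \<bullet> cs n) = (\<lambda>n. 0)" by (rule ext)
    with l have "(\<lambda>n. 0::real) \<longlonglongrightarrow> h \<bullet> c" by simp
    thus ?thesis using LIMSEQ_const_iff by metis
  qed
  have encl_c: "encl c m" unfolding encl_def
  proof (intro conjI ballI hc)
    fix p assume p: "p \<in> P"
    have l: "(\<lambda>n. norm (p - cs n)) \<longlonglongrightarrow> norm (p - c)" by (intro tendsto_intros c)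
    have ev: "\<forall>\<^sub>F n in sequentially. norm (p - cs n) \<le> rs n" using cr p unfolding encl_def by (intro always_eventually) blast
    show "norm (p - c) \<le> m" using tendsto_le[OF sequentially_bot rs_lim l ev] .
  qed
  have mpos: "m > 0"
  proof -
    have cs: "\<bar>h \<bullet> (p0 - c)\<bar> \<le> norm h * norm (p0 - c)" by (rule Cauchy_Schwarz_ineq2)
    have e1: "h \<bullet> (p0 - c) = h \<bullet> p0" using hc by (simp add: inner_diff_right)
    have e2: "h \<bullet> p0 > 0" using p0 PS by (auto simp: halfspace_def)
    have e3: "norm (p0 - c) \<le> m" using encl_c p0 unfolding encl_def by blast
    from cs e1 e2 unit have "h \<bullet> p0 \<le> norm (p0 - c)" by simp
    with e2 e3 show ?thesis by linarith
  qed
  define x where "x = c + m *\<^sub>R h"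
  have xh: "h \<bullet> x = m" using hc h1 by (simp add: x_def inner_add_right)
  have xp: "comp_perp h x = c" using xh by (simp add: comp_perp_def x_def)
  have least: "sponge_le h x y" if y: "y \<in> halfspace h" "\<forall>p\<in>P. sponge_le h p y" for y
  proof -
    define c' where "c' = comp_perp h y"
    define r' where "r' = h \<bullet> y"
    have e': "encl c' r'" unfolding encl_def c'_def r'_def
      using perp_inner[OF unit, of y] y(2) by (auto simp: sponge_le_def comp_h_def)
    have r'0: "0 \<le> r'" using r_nn[OF e'] .
    define D where "D = norm (c' - c)^2"
    have step: "(1-t)*D \<le> r'^2 - m^2" if t: "0 < t" "t \<le> 1" for t
    proof -
      have "m^2 \<le> (1-t)*m^2 + t*r'^2 - t*(1-t)*D"
        using key[OF encl_c e', of t] t unfolding D_def by auto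
      hence "t*((1-t)*D) \<le> t*(r'^2 - m^2)" by (simp add: algebra_simps)
      thus ?thesis using t by simp
    qed
    have "D \<le> r'^2 - m^2"
    proof (rule real_aux)
      show "0 \<le> D" unfolding D_def by simp
      fix t :: real assume "0 < t" "t \<le> 1"
      thus "(1-t)*D \<le> r'^2 - m^2" by (rule step)
    qed
    have o: "(c - c') \<bullet> (m *\<^sub>R h) = 0" using hc perp_inner[OF unit, of y]
      by (simp add: c'_def inner_diff_left inner_commute[of _ h] inner_diff_right)
    have "norm (x - c')^2 = norm ((c - c') + m *\<^sub>R h)^2" by (simp add: x_def algebra_simps)
    also have "\<dots> = D + m^2" unfolding pyth[OF o] D_def using unit m0
      by (simp add: norm_minus_commute power_mult_distrib)
    finally have "norm (x - c')^2 \<le> r'^2" using \<open>D \<le> r'^2 - m^2\<close> by linarith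
    hence "norm (x - c') \<le> r'" using r'0 by (rule power2_le_imp_le)
    thus ?thesis unfolding sponge_le_def comp_h_def c'_def r'_def .
  qed
  have "is_join (halfspace h) (sponge_le h) P x"
    unfolding is_join_def
  proof (intro conjI ballI impI)
    show "x \<in> halfspace h" using xh mpos by (simp add: halfspace_def)
    fix p assume "p \<in> P"
    thus "sponge_le h p x" using encl_c unfolding sponge_le_def comp_h_def xp xh encl_def by auto
  next
    fix y assume "y \<in> halfspace h" "\<forall>p\<in>P. sponge_le h p y"
    thus "sponge_le h x y" by (rule least)
  qed
  thus ?thesis by blast
qed

theorem mainTheorem2:
  fixes h :: "'a::{real_inner, complete_space}"
  assumes dim2: "\<exists>B::'a set. independent B \<and> finite B \<and> card B = 2"
    and unit: "norm h = 1"
  shows "cc_sponge (halfspace h) (sponge_le h)"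
  unfolding cc_sponge_def
proof (intro conjI allI impI)
  show "orientation (halfspace h) (sponge_le h)" using orient[OF unit] .
  fix P assume "P \<subseteq> halfspace h \<and> P \<noteq> {} \<and> right_bounded (halfspace h) (sponge_le h) P"
  then obtain s where "P \<subseteq> halfspace h" "P \<noteq> {}" "s \<in> halfspace h" "\<forall>p\<in>P. sponge_le h p s"
    unfolding right_bounded_def by blast
  thus "\<exists>x. is_join (halfspace h) (sponge_le h) P x" using join_exists[OF unit] by blast
qed

end
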